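(* The subvariety $\mathcal S\subseteq\mathscr X_2$ is a rational section for the action of $G=\mathrm{SO}_3(\mathbb C)\times\mathrm{SO}_3(\mathbb C)$ on $\mathscr X_2$.
   Context: Two-qubit setting in coordinates: identify $V_1=V_2=\mathbb C^2$ and use the Pauli matrices $\sigma_1=\begin{pmatrix}0&1\\1&0\end{pmatrix}$, $\sigma_2=\begin{pmatrix}0&-i\\i&0\end{pmatrix}$, $\sigma_3=\begin{pmatrix}1&0\\0&-1\end{pmatrix}$. Every trace-one endomorphism $\rho$ of $\mathbb C^2\otimes\mathbb C^2$ (L-state) is uniquely $\rho=\tfrac14\big(I\otimes I+\sum_a v_a\sigma_a\otimes I+\sum_b w_bI\otimes\sigma_b+\sum_{a,b}C_{ba}\sigma_a\otimes\sigma_b\big)$, giving coordinates $(v,w,C)\in\mathbb C^3\times\mathbb C^3\times M_3(\mathbb C)$ on the space $\mathscr L_2$ of L-states. The group $G=\mathrm{SO}_3(\mathbb C)\times\mathrm{SO}_3(\mathbb C)$ ($\cong\mathrm{PGL}_2(\mathbb C)^2$ acting by conjugation) acts by $(g_1,g_2)\cdot(v,w,C)=(g_1v,g_2w,g_2Cg_1^{-1})$. Let $X_0\subseteq\mathscr L_2$ be the linear subspace of $(v,w,C)$ with $v_1=v_2=w_1=w_2=0$ and $C_{ba}=0$ whenever exactly one of $a,b$ equals $3$. The variety of X-states $\mathscr X_2$ is the Zariski closure of $G\cdot X_0$ with reduced structure (equivalently, the Zariski closure of the set of X-states: L-states that, for some choice of bases of the two qubits, are block-diagonal with respect to the even/odd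 parity splitting of the tensor basis). Let $\mathcal S\cong\mathbb C\times\mathbb C\times\mathbb C^3$ be embedded in $\mathscr X_2$ by $(x,y,\lambda)\mapsto(v,w,C)=((0,0,x),(0,0,y),\operatorname{diag}(\lambda_1,\lambda_2,\lambda_3))$. For a group $G$ acting on a variety $X$, a subvariety $\mathcal S$ with normalizer $N=\{g: g\mathcal S\subseteq\mathcal S\}$ is a rational section if there is a dense open $\mathcal S_0\subseteq\mathcal S$ with $\overline{G\mathcal S}=X$ and such that every $g\in G$ with $g\mathcal S_0\cap\mathcal S_0\ne\emptyset$ lies in $N$. *)

theory Defs
  imports "HOL-Analysis.Analysis"
begin

text \<open>L-states of two qubits in coordinates (v, w, C), C indexed as C $ b $ a = C_{ba}.
The index type 3 has elements 1, 2, 3 (with 3 = 0 in the numeral type).\<close>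

type_synonym lstate = "(complex^3) \<times> (complex^3) \<times> (complex^3^3)"

inductive_set lpoly :: "(lstate \<Rightarrow> complex) set" where
  coord_v: "(\<lambda>(v,w,C). v $ i) \<in> lpoly"
| coord_w: "(\<lambda>(v,w,C). w $ i) \<in> lpoly"
| coord_C: "(\<lambda>(v,w,C). C $ i $ j) \<in> lpoly"
| const: "(\<lambda>_. c) \<in> lpoly"
| add: "p \<in> lpoly \<Longrightarrow> q \<in> lpoly \<Longrightarrow> (\<lambda>x. p x + q x) \<in> lpoly"
| mult: "p \<in> lpoly \<Longrightarrow> q \<in> lpoly \<Longrightarrow> (\<lambda>x. p x * q x) \<in> lpoly"

definition zariski :: "lstate topology" where
  "zariski = topology_generated_by {{x. p x \<noteq> 0} | p. p \<in> lpoly}"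

definition SO3 :: "(complex^3^3) set" where
  "SO3 = {g. transpose g ** g = mat 1 \<and> det g = 1}"

definition Ggrp :: "((complex^3^3) \<times> (complex^3^3)) set" where
  "Ggrp = SO3 \<times> SO3"

definition act :: "((complex^3^3) \<times> (complex^3^3)) \<Rightarrow> lstate \<Rightarrow> lstate" where
  "act g x = (case g of (g1, g2) \<Rightarrow> case x of (v, w, C) \<Rightarrow>
      (g1 *v v, g2 *v w, g2 ** C ** matrix_inv g1))"

definition X0 :: "lstate set" where
  "X0 = {(v, w, C). v $ 1 = 0 \<and> v $ 2 = 0 \<and> w $ 1 = 0 \<and> w $ 2 = 0 \<and>
         (\<forall>a b :: 3. (a = 3) \<noteq> (b = 3) \<longrightarrow> C $ b $ a = 0)}"

definition Xvar :: "lstate set" where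
  "Xvar = zariski closure_of (\<Union>g\<in>Ggrp. act g ` X0)"

definition embS :: "complex \<Rightarrow> complex \<Rightarrow> complex^3 \<Rightarrow> lstate" where
  "embS x y l = ((\<chi> i. if i = 3 then x else 0), (\<chi> i. if i = 3 then y else 0),
                 (\<chi> b a. if a = b then l $ a else 0))"

definition Ssec :: "lstate set" where
  "Ssec = {embS x y l | x y l. True}"

definition normalizer :: "lstate set \<Rightarrow> ((complex^3^3) \<times> (complex^3^3)) set" where
  "normalizer S = {g \<in> Ggrp. act g ` S \<subseteq> S}"

definition rational_section :: "lstate set \<Rightarrow> lstate set \<Rightarrow> bool" where
  "rational_section X S \<longleftrightarrow>
     (\<exists>S0. S0 \<subseteq> S \<and> openin (subtopology zariski S) S0 \<and> S \<subseteq> zariski closure_of S0 \<and>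
          zariski closure_of (\<Union>g\<in>Ggrp. act g ` S) = X \<and>
          (\<forall>g\<in>Ggrp. act g ` S0 \<inter> S0 \<noteq> {} \<longrightarrow> g \<in> normalizer S))"

end

theory Submission
  imports Defs
begin


lemma lpoly_cont: "p \<in> lpoly \<Longrightarrow> continuous_on UNIV p"
  apply (induction rule: lpoly.induct)
  apply (auto intro!: continuous_intros simp: case_prod_beta)
  done
lemma zopen: "openin zariski U \<Longrightarrow> open U"
  unfolding zariski_def openin_topology_generated_by_iff
proof (induction rule: generate_topology_on.induct)
  case (Basis s)
  then obtain p where "p \<in> lpoly" "s = {x. p x \<noteq> 0}" by auto
  then show ?case using lpoly_cont[of p] open_Collect_neq[of p "\<lambda>_. 0"] by (auto intro: continuous_intros)
qed auto
lemma topz: "topspace zariski = UNIV"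
  unfolding zariski_def topology_generated_by_topspace
proof -
  have "UNIV \<in> {{x. p x \<noteq> 0} |p. p \<in> lpoly}" 
    using lpoly.const[of 1] by (auto intro!: exI[of _ "\<lambda>_. 1"])
  then show "\<Union> {{x. p x \<noteq> 0} |p. p \<in> lpoly} = UNIV" by blast
qed
lemma eucl_zcl: "closure A \<subseteq> zariski closure_of A"
  unfolding closure_of_def topz 
proof (clarsimp simp: closure_iff_nhds_not_empty)
  fix x T assume "\<forall>Aa S. S \<subseteq> Aa \<longrightarrow> open S \<longrightarrow> x \<in> S \<longrightarrow> A \<inter> Aa \<noteq> {}" "x \<in> T" "openin zariski T"
  then show "\<exists>y\<in>A. y \<in> T" using zopen[of T] by blast
qed
lemma so3_right: "g \<in> SO3 \<Longrightarrow> g ** transpose g = mat 1"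
  unfolding SO3_def using matrix_left_right_inverse by blast
lemma so3_inv: "g \<in> SO3 \<Longrightarrow> matrix_inv g = transpose g"
proof -
  assume g: "g \<in> SO3"
  have 1: "transpose g ** g = mat 1" using g unfolding SO3_def by auto
  have 2: "g ** transpose g = mat 1" using so3_right[OF g] .
  let ?P = "\<lambda>A'. g ** A' = mat 1 \<and> A' ** g = mat 1"
  have "?P (matrix_inv g)" unfolding matrix_inv_def by (rule someI[of ?P]) (use 1 2 in auto)
  then have "matrix_inv g = matrix_inv g ** (g ** transpose g)" using 2 by (simp add: matrix_mul_rid)
  also have "\<dots> = transpose g" using \<open>?P (matrix_inv g)\<close> by (simp add: matrix_mul_assoc matrix_mul_lid)
  finally show ?thesis .
qed
lemma so3_mult: "g \<in> SO3 \<Longrightarrow> h \<in> SO3 \<Longrightarrow> g ** h \<in> SO3"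
  unfolding SO3_def
  by (auto simp: matrix_transpose_mul det_mul matrix_mul_assoc) (metis matrix_mul_assoc matrix_mul_lid)
lemma act_simp: "g1 \<in> SO3 \<Longrightarrow> act (g1,g2) (v,w,C) = (g1 *v v, g2 *v w, g2 ** C ** transpose g1)"
  by (simp add: act_def so3_inv)
lemma act_comp: "g \<in> Ggrp \<Longrightarrow> h \<in> Ggrp \<Longrightarrow> act g (act h x) = act (fst g ** fst h, snd g ** snd h) x"
  by (cases g; cases h; cases x) (auto simp: Ggrp_def act_simp so3_mult matrix_vector_mul_assoc matrix_transpose_mul matrix_mul_assoc)
lemma act_cont: "g \<in> Ggrp \<Longrightarrow> continuous_on UNIV (act g)"
proof -
  assume "g \<in> Ggrp"
  obtain g1 g2 where g: "g = (g1,g2)" "g1 \<in> SO3" using \<open>g \<in> Ggrp\<close> by (cases g) (auto simp: Ggrp_def)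
  have "act g = (\<lambda>x. (g1 *v fst x, g2 *v fst (snd x), g2 ** snd (snd x) ** transpose g1))"
    by (rule ext) (auto simp: g act_simp)
  moreover have "continuous_on UNIV \<dots>"
    unfolding matrix_vector_mult_def matrix_matrix_mult_def
    by (intro continuous_intros)
  ultimately show ?thesis by simp
qed

lemma angle_ex:
  fixes u v :: complex
  assumes "u^2 + v^2 \<noteq> 0"
  shows "\<exists>P a. u = P * cos a \<and> v = P * sin a"
proof -
  define P where "P = csqrt (u^2+v^2)"
  have P2: "P^2 = u^2+v^2" unfolding P_def by simp
  have P0: "P \<noteq> 0" using assms P2 by auto
  have fac: "(u + \<i> * v) * (u - \<i> * v) = u^2+v^2" by (simp add: algebra_simps power2_eq_square)
  have z0: "u + \<i> * v \<noteq> 0" using fac assms by auto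
  define z where "z = (u + \<i> * v) / P"
  have zn: "z \<noteq> 0" using z0 P0 by (simp add: z_def)
  define a where "a = - \<i> * Ln z"
  have e1: "exp (\<i> * a) = z" using zn by (simp add: a_def exp_Ln)
  have e2: "exp (- (\<i> * a)) = (u - \<i> * v) / P"
  proof -
    have "exp (- (\<i> * a)) = inverse z" using e1 by (simp add: exp_minus)
    also have "\<dots> = (u - \<i> * v) / P"
      using P0 z0 fac P2 unfolding z_def by (simp add: field_simps power2_eq_square)
    finally show ?thesis .
  qed
  have "cos a = u / P" unfolding cos_exp_eq e1 e2 z_def using P0 by (simp add: field_simps)
  moreover have "sin a = v / P" unfolding sin_exp_eq e1 e2 z_def using P0 by (simp add: field_simps)
  ultimately show ?thesis using P0 by (intro exI[of _ P] exI[of _ a]) auto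
qed

definition rot :: "complex \<Rightarrow> complex^3^3" where
  "rot t = (\<chi> i j. if i = 3 \<and> j = 3 then 1 else if i = 3 \<or> j = 3 then 0
      else if i = j then cos t else if i = 2 then sin t else - sin t)"
definition dg :: "complex^3 \<Rightarrow> complex^3^3" where
  "dg l = (\<chi> b a. if a = b then l $ a else 0)"

lemma rot_nth: "rot t $ 1 $ 1 = cos t" "rot t $ 1 $ 2 = - sin t" "rot t $ 1 $ 3 = 0"
  "rot t $ 2 $ 1 = sin t" "rot t $ 2 $ 2 = cos t" "rot t $ 2 $ 3 = 0"
  "rot t $ 3 $ 1 = 0" "rot t $ 3 $ 2 = 0" "rot t $ 3 $ 3 = 1"
  by (simp_all add: rot_def)


lemma rot_SO3: "rot t \<in> SO3"
  unfolding SO3_def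
  by (auto simp: vec_eq_iff forall_3 matrix_matrix_mult_def sum_3 rot_nth det_3 mat_def transpose_def
      algebra_simps power2_eq_square[symmetric])

lemma rep:
  fixes M :: "complex^3^3"
  assumes z: "M$1$3 = 0" "M$2$3 = 0" "M$3$1 = 0" "M$3$2 = 0"
    and n1: "(M$1$1 + M$2$2)^2 + (M$2$1 - M$1$2)^2 \<noteq> 0"
    and n2: "(M$1$1 - M$2$2)^2 + (M$1$2 + M$2$1)^2 \<noteq> 0"
  shows "\<exists>t1 t2 l. M = rot t2 ** dg l ** transpose (rot t1)"
proof -
  obtain P1 a where a: "M$1$1 + M$2$2 = P1 * cos a" "M$2$1 - M$1$2 = P1 * sin a"
    using angle_ex[OF n1] by blast
  obtain P2 b where b: "M$1$1 - M$2$2 = P2 * cos b" "M$1$2 + M$2$1 = P2 * sin b"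
    using angle_ex[OF n2] by blast
  define t1 where "t1 = (b - a)/2"
  define t2 where "t2 = (a + b)/2"
  have ab: "a = t2 - t1" "b = t2 + t1" unfolding t1_def t2_def by (simp_all add: field_simps)
  define l :: "complex^3" where "l = vector [(P1+P2)/2, (P1-P2)/2, M$3$3]"
  have m: "M$1$1 = (P1 * cos a + P2 * cos b)/2" "M$2$2 = (P1 * cos a - P2 * cos b)/2"
    "M$2$1 = (P1 * sin a + P2 * sin b)/2" "M$1$2 = (P2 * sin b - P1 * sin a)/2"
    using a b by algebra+
  have "M = rot t2 ** dg l ** transpose (rot t1)"
    apply (simp add: vec_eq_iff forall_3 matrix_matrix_mult_def sum_3 rot_nth transpose_def dg_def l_def z)
    apply (simp only: m ab cos_add sin_add cos_diff sin_diff)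
    apply (simp add: field_simps)
    done
  then show ?thesis by blast
qed


lemma dg_embS: "embS x y l = ((\<chi> i. if i = 3 then x else 0), (\<chi> i. if i = 3 then y else 0), dg l)"
  by (simp add: embS_def dg_def)

lemma rot_vec: "rot t *v (\<chi> i. if i = 3 then x else 0) = (\<chi> i. if i = 3 then x else 0)"
  by (simp add: vec_eq_iff forall_3 matrix_vector_mult_def sum_3 rot_nth)

lemma Ssec_X0: "Ssec \<subseteq> X0"
  by (auto simp: Ssec_def X0_def embS_def)

lemma X0_closure:
  assumes "x0 \<in> X0"
  shows "x0 \<in> closure (\<Union>g\<in>Ggrp. act g ` Ssec)"
proof -
  obtain v w C where x0: "x0 = (v,w,C)" by (cases x0) auto
  have X: "v$1 = 0" "v$2 = 0" "w$1 = 0" "w$2 = 0" "C$1$3 = 0" "C$2$3 = 0" "C$3$1 = 0" "C$3$2 = 0"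
    using assms unfolding x0 X0_def by auto
  have v: "v = (\<chi> i. if i = 3 then v$3 else 0)" "w = (\<chi> i. if i = 3 then w$3 else 0)"
    using X by (auto simp: vec_eq_iff forall_3)
  define Ct :: "complex \<Rightarrow> complex^3^3" where "Ct t = (\<chi> i j. C$i$j + t * (if i = 1 \<and> j = 1 then 1 else 0))" for t
  define Pt where "Pt t = (v, w, Ct t)" for t
  define u1 where "u1 = C$1$1 + C$2$2"
  define v1 where "v1 = C$2$1 - C$1$2"
  define u2 where "u2 = C$1$1 - C$2$2"
  define v2 where "v2 = C$1$2 + C$2$1"
  define B where "B = {-u1 + \<i> * v1, -u1 - \<i> * v1, -u2 + \<i> * v2, -u2 - \<i> * v2}"
  let ?GS = "\<Union>g\<in>Ggrp. act g ` Ssec"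
  have sq: "(u + t)^2 + v'^2 \<noteq> 0" if "t \<noteq> -u + \<i> * v'" "t \<noteq> -u - \<i> * v'" for u v' t :: complex
  proof
    assume "(u + t)^2 + v'^2 = 0"
    moreover have "(u + t + \<i> * v') * (u + t - \<i> * v') = (u + t)^2 + v'^2"
      by (simp add: algebra_simps power2_eq_square)
    ultimately have "(u + t + \<i> * v') * (u + t - \<i> * v') = 0" by simp
    then have "u + t + \<i> * v' = 0 \<or> u + t - \<i> * v' = 0" by simp
    then have "t = -u - \<i> * v' \<or> t = -u + \<i> * v'" by algebra
    then show False using that by blast
  qed
  have in_GS: "Pt t \<in> ?GS" if "t \<notin> B" for t
  proof -
    have n1: "(Ct t$1$1 + Ct t$2$2)^2 + (Ct t$2$1 - Ct t$1$2)^2 \<noteq> 0"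
      using sq[of t u1 v1] that unfolding B_def Ct_def u1_def v1_def by (simp add: algebra_simps)
    have n2: "(Ct t$1$1 - Ct t$2$2)^2 + (Ct t$1$2 + Ct t$2$1)^2 \<noteq> 0"
      using sq[of t u2 v2] that unfolding B_def Ct_def u2_def v2_def by (simp add: algebra_simps)
    obtain t1 t2 l where r: "Ct t = rot t2 ** dg l ** transpose (rot t1)"
      using rep[OF _ _ _ _ n1 n2] X by (auto simp: Ct_def)
    have "Pt t = act (rot t1, rot t2) (embS (v$3) (w$3) l)"
      unfolding Pt_def dg_embS act_simp[OF rot_SO3] rot_vec r[symmetric] using v by simp
    moreover have "(rot t1, rot t2) \<in> Ggrp" by (simp add: Ggrp_def rot_SO3)
    moreover have "embS (v$3) (w$3) l \<in> Ssec" by (auto simp: Ssec_def)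
    ultimately show ?thesis by blast
  qed
  have cont: "continuous_on UNIV Pt"
    unfolding Pt_def Ct_def by (intro continuous_intros)
  have "closure (- B) = UNIV"
    by (simp add: closure_complement empty_interior_finite B_def)
  then have "Pt 0 \<in> Pt ` closure (- B)" by auto
  also have "\<dots> \<subseteq> closure ?GS"
    by (rule image_closure_subset) (use cont in_GS in \<open>auto intro: continuous_on_subset closure_subset[THEN subsetD]\<close>)
  finally show ?thesis
    by (simp add: Pt_def Ct_def x0)
qed


lemma Ggrp_mult: "g \<in> Ggrp \<Longrightarrow> h \<in> Ggrp \<Longrightarrow> (fst g ** fst h, snd g ** snd h) \<in> Ggrp"
  by (auto simp: Ggrp_def so3_mult)

lemma GS_inv: assumes g: "g \<in> Ggrp" shows "act g ` (\<Union>h\<in>Ggrp. act h ` Ssec) \<subseteq> (\<Union>h\<in>Ggrp. act h ` Ssec)"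
proof
  fix z assume "z \<in> act g ` (\<Union>h\<in>Ggrp. act h ` Ssec)"
  then obtain h s where hs: "h \<in> Ggrp" "s \<in> Ssec" "z = act g (act h s)" by blast
  then have "z = act (fst g ** fst h, snd g ** snd h) s" "(fst g ** fst h, snd g ** snd h) \<in> Ggrp"
    using act_comp Ggrp_mult g by blast+
  then show "z \<in> (\<Union>h\<in>Ggrp. act h ` Ssec)" using hs by blast
qed

lemma GX_closure: "(\<Union>g\<in>Ggrp. act g ` X0) \<subseteq> closure (\<Union>g\<in>Ggrp. act g ` Ssec)"
proof
  fix z assume "z \<in> (\<Union>g\<in>Ggrp. act g ` X0)"
  then obtain g x0 where g: "g \<in> Ggrp" and x0: "x0 \<in> X0" and z: "z = act g x0" by blast
  let ?GS = "\<Union>g\<in>Ggrp. act g ` Ssec"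
  have "act g ` closure ?GS \<subseteq> closure ?GS"
    apply (rule image_closure_subset)
    using act_cont[OF g] apply (blast intro: continuous_on_subset)
     apply simp
    using GS_inv[OF g] closure_subset[of "\<Union>g\<in>Ggrp. act g ` Ssec"] by blast
  then show "z \<in> closure ?GS" using X0_closure[OF x0] z by blast
qed

lemma closure_eq: "zariski closure_of (\<Union>g\<in>Ggrp. act g ` Ssec) = Xvar"
proof
  show "zariski closure_of (\<Union>g\<in>Ggrp. act g ` Ssec) \<subseteq> Xvar"
    unfolding Xvar_def by (rule closure_of_mono) (use Ssec_X0 in blast)
  have "(\<Union>g\<in>Ggrp. act g ` X0) \<subseteq> zariski closure_of (\<Union>g\<in>Ggrp. act g ` Ssec)"
    using GX_closure eucl_zcl by blast
  then show "Xvar \<subseteq> zariski closure_of (\<Union>g\<in>Ggrp. act g ` Ssec)"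
    unfolding Xvar_def by (metis closure_of_mono closure_of_closure_of)
qed


definition S0set :: "lstate set" where
  "S0set = {embS x y l | x y l. x \<noteq> 0 \<and> y \<noteq> 0 \<and> l$1^2 \<noteq> l$2^2 \<and> l$1^2 \<noteq> l$3^2 \<and> l$2^2 \<noteq> l$3^2}"

lemma lp_v: "(\<lambda>z. fst z $ i) \<in> lpoly"
proof -
  have "(\<lambda>z. fst z $ i) = (\<lambda>(v,w,C). v $ i)" by (auto simp: fun_eq_iff)
  then show ?thesis using lpoly.coord_v by metis
qed
lemma lp_w: "(\<lambda>z. fst (snd z) $ i) \<in> lpoly"
proof -
  have "(\<lambda>z. fst (snd z) $ i) = (\<lambda>(v,w,C). w $ i)" by (auto simp: fun_eq_iff)
  then show ?thesis using lpoly.coord_w by metis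
qed
lemma lp_C: "(\<lambda>z. snd (snd z) $ i $ j) \<in> lpoly"
proof -
  have "(\<lambda>z. snd (snd z) $ i $ j) = (\<lambda>(v,w,C). C $ i $ j)" by (auto simp: fun_eq_iff)
  then show ?thesis using lpoly.coord_C by metis
qed
lemma lp_diff: "p \<in> lpoly \<Longrightarrow> q \<in> lpoly \<Longrightarrow> (\<lambda>x. p x - q x) \<in> lpoly"
proof -
  assume p: "p \<in> lpoly" and q: "q \<in> lpoly"
  have "(\<lambda>x. p x + (\<lambda>_. -1) x * q x) \<in> lpoly" by (intro lpoly.add lpoly.mult p q lpoly.const)
  then show ?thesis by simp
qed

definition pS :: "lstate \<Rightarrow> complex" where
  "pS z = fst z $ 3 * fst (snd z) $ 3 *
     ((snd (snd z) $ 1 $ 1 * snd (snd z) $ 1 $ 1 - snd (snd z) $ 2 $ 2 * snd (snd z) $ 2 $ 2) *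
      (snd (snd z) $ 1 $ 1 * snd (snd z) $ 1 $ 1 - snd (snd z) $ 3 $ 3 * snd (snd z) $ 3 $ 3) *
      (snd (snd z) $ 2 $ 2 * snd (snd z) $ 2 $ 2 - snd (snd z) $ 3 $ 3 * snd (snd z) $ 3 $ 3))"

lemma pS_lpoly: "pS \<in> lpoly"
  unfolding pS_def[abs_def]
  by (intro lpoly.mult lp_diff lp_v lp_w lp_C)

lemma S0_open: "openin (subtopology zariski Ssec) S0set"
  unfolding openin_subtopology
proof (intro exI conjI)
  show "openin zariski {z. pS z \<noteq> 0}"
    unfolding zariski_def openin_topology_generated_by_iff
    by (rule generate_topology_on.Basis) (use pS_lpoly in blast)
  have pe: "pS (embS x y l) \<noteq> 0 \<longleftrightarrow> x \<noteq> 0 \<and> y \<noteq> 0 \<and> l$1^2 \<noteq> l$2^2 \<and> l$1^2 \<noteq> l$3^2 \<and> l$2^2 \<noteq> l$3^2" for x y l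
    by (simp add: pS_def embS_def power2_eq_square)
  have "{z. pS z \<noteq> 0} \<inter> Ssec = {embS x y l |x y l. pS (embS x y l) \<noteq> 0}"
    unfolding Ssec_def by blast
  then show "S0set = {z. pS z \<noteq> 0} \<inter> Ssec"
    unfolding S0set_def pe by simp
qed

lemma S0_sub: "S0set \<subseteq> Ssec"
  by (auto simp: S0set_def Ssec_def)

lemma embS_cont:
  assumes "continuous_on UNIV f" "continuous_on UNIV g" "continuous_on UNIV h"
  shows "continuous_on UNIV (\<lambda>t. embS (f t) (g t) (h t))"
  unfolding embS_def
proof (intro continuous_on_Pair continuous_on_vec_lambda)
  fix i :: 3
  show "continuous_on UNIV (\<lambda>t. if i = 3 then f t else 0)" using assms by (cases "i = 3") auto
  show "continuous_on UNIV (\<lambda>t. if i = 3 then g t else 0)" using assms by (cases "i = 3") auto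
  fix j :: 3
  show "continuous_on UNIV (\<lambda>t. if j = i then h t $ j else 0)" using assms by (cases "j = i") (auto intro: continuous_intros)
qed

lemma lin_sq:
  fixes a b c d t :: complex
  assumes "c \<noteq> d" "c \<noteq> -d" "(a + c*t)^2 = (b + d*t)^2"
  shows "t = (b - a)/(c - d) \<or> t = -(a+b)/(c+d)"
proof -
  have "a + c*t = b + d*t \<or> a + c*t = -(b + d*t)" using assms(3) by (simp add: power2_eq_iff)
  then show ?thesis
  proof
    assume "a + c*t = b + d*t"
    then have "(c - d) * t = b - a" by algebra
    then show ?thesis using assms(1) by (simp add: field_simps)
  next
    assume "a + c*t = -(b + d*t)"
    then have "(c + d) * t = -(a + b)" by algebra
    moreover have nz: "c + d \<noteq> 0" using assms(2) eq_neg_iff_add_eq_0 by blast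
    ultimately have "t = -(a+b)/(c+d)" by (simp add: eq_divide_eq mult.commute)
    then show ?thesis by blast
  qed
qed

lemma S_dense: "Ssec \<subseteq> closure S0set"
proof
  fix s assume "s \<in> Ssec"
  then obtain x y l where s: "s = embS x y l" by (auto simp: Ssec_def)
  define w0 :: "complex^3" where "w0 = vector [1,2,4]"
  define h where "h t = (\<chi> i. l$i + t * w0$i)" for t
  define Q where "Q t = embS (x + t) (y + t) (h t)" for t
  define B where "B = {-x, -y, (l$2 - l$1)/(1-2), -(l$1+l$2)/(1+2), (l$3-l$1)/(1-4), -(l$1+l$3)/(1+4), (l$3-l$2)/(2-4), -(l$2+l$3)/(2+4)}"
  have inS0: "Q t \<in> S0set" if "t \<notin> B" for t
  proof -
    have h: "h t $ 1 = l$1 + t" "h t $ 2 = l$2 + 2*t" "h t $ 3 = l$3 + 4*t"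
      by (simp_all add: h_def w0_def)
    have "x + t \<noteq> 0" "y + t \<noteq> 0" using that unfolding B_def by (auto simp: add_eq_0_iff)
    moreover have "(l$1 + 1*t)^2 \<noteq> (l$2 + 2*t)^2"
      using lin_sq[of 1 2 "l$1" t "l$2"] that unfolding B_def by auto
    moreover have "(l$1 + 1*t)^2 \<noteq> (l$3 + 4*t)^2"
      using lin_sq[of 1 4 "l$1" t "l$3"] that unfolding B_def by auto
    moreover have "(l$2 + 2*t)^2 \<noteq> (l$3 + 4*t)^2"
      using lin_sq[of 2 4 "l$2" t "l$3"] that unfolding B_def by auto
    ultimately have cc: "x + t \<noteq> 0 \<and> y + t \<noteq> 0 \<and> (h t$1)^2 \<noteq> (h t$2)^2 \<and> (h t$1)^2 \<noteq> (h t$3)^2 \<and> (h t$2)^2 \<noteq> (h t$3)^2"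
      using h by simp
    show ?thesis unfolding S0set_def Q_def
      apply (rule CollectI, rule exI[of _ "x+t"], rule exI[of _ "y+t"], rule exI[of _ "h t"])
      using cc by simp
  qed
  have cont: "continuous_on UNIV Q"
    unfolding Q_def h_def by (intro embS_cont continuous_intros)
  have "closure (- B) = UNIV"
    by (simp add: closure_complement empty_interior_finite B_def)
  then have "Q 0 \<in> Q ` closure (- B)" by auto
  also have "\<dots> \<subseteq> closure S0set"
    apply (rule image_closure_subset)
    using cont apply (blast intro: continuous_on_subset)
     apply simp
    using inS0 closure_subset[of S0set] by blast
  finally show "s \<in> closure S0set"
    by (simp add: Q_def h_def s vec_eq_iff)
qed


lemma dg_r: "(M ** dg l) $ i $ j = M $ i $ j * l $ j"
  using exhaust_3[of j] by (auto simp: matrix_matrix_mult_def dg_def sum_3)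
lemma dg_l: "(dg l ** M) $ i $ j = l $ i * M $ i $ j"
  using exhaust_3[of i] by (auto simp: matrix_matrix_mult_def dg_def sum_3)
lemma dg_tr: "transpose (dg l) = dg l"
  by (auto simp: vec_eq_iff transpose_def dg_def)

lemma dg_dg: "dg l ** dg m = dg (\<chi> i. l$i * m$i)"
  by (simp add: vec_eq_iff dg_r) (auto simp: dg_def)

lemma e3_vec: fixes A :: "complex^3^3" shows "(A *v (\<chi> i. if i = 3 then x else 0)) $ i = A $ i $ 3 * x"
  by (simp add: matrix_vector_mult_def sum_3)

lemma norm_lemma:
  assumes g: "g \<in> Ggrp" and s: "s \<in> S0set" and gs: "act g s \<in> S0set"
  shows "g \<in> normalizer Ssec"
proof -
  obtain A B where gAB: "g = (A, B)" and A: "A \<in> SO3" and B: "B \<in> SO3" using g by (auto simp: Ggrp_def)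
  obtain x y l where sx: "s = embS x y l" and x: "x \<noteq> 0" and y: "y \<noteq> 0" using s by (auto simp: S0set_def)
  obtain x' y' l' where sx': "act g s = embS x' y' l'" and
    d: "l'$1^2 \<noteq> l'$2^2" "l'$1^2 \<noteq> l'$3^2" "l'$2^2 \<noteq> l'$3^2" using gs by (auto simp: S0set_def)
  have eqs: "A *v (\<chi> i. if i = 3 then x else 0) = (\<chi> i. if i = 3 then x' else 0)"
    "B *v (\<chi> i. if i = 3 then y else 0) = (\<chi> i. if i = 3 then y' else 0)"
    "B ** dg l ** transpose A = dg l'"
    using sx' unfolding sx gAB dg_embS act_simp[OF A] by auto
  have A13: "A$1$3 = 0" "A$2$3 = 0"
    using arg_cong[OF eqs(1), of "\<lambda>v. v$1"] arg_cong[OF eqs(1), of "\<lambda>v. v$2"] x by (auto simp: e3_vec)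
  have B13: "B$1$3 = 0" "B$2$3 = 0"
    using arg_cong[OF eqs(2), of "\<lambda>v. v$1"] arg_cong[OF eqs(2), of "\<lambda>v. v$2"] y by (auto simp: e3_vec)
  have AA: "transpose A ** A = mat 1" using A by (simp add: SO3_def)
  have BB: "transpose B ** B = mat 1" using B by (simp add: SO3_def)
  have E1: "B ** dg l = dg l' ** A"
  proof -
    have "B ** dg l = B ** dg l ** (transpose A ** A)" by (simp add: AA matrix_mul_rid)
    also have "\<dots> = dg l' ** A" using eqs(3) by (simp add: matrix_mul_assoc)
    finally show ?thesis .
  qed
  have E2: "A ** dg l = dg l' ** B"
  proof -
    have t: "A ** dg l ** transpose B = dg l'"
      using arg_cong[OF eqs(3), of transpose] by (simp add: matrix_transpose_mul dg_tr matrix_mul_assoc)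
    have "A ** dg l = A ** dg l ** (transpose B ** B)" by (simp add: BB matrix_mul_rid)
    also have "\<dots> = dg l' ** B" using t by (simp add: matrix_mul_assoc)
    finally show ?thesis .
  qed
  have E3: "B ** dg l ** dg l = dg l' ** dg l' ** B"
  proof -
    have "B ** dg l ** dg l = dg l' ** (A ** dg l)" by (simp only: E1 matrix_mul_assoc)
    also have "\<dots> = dg l' ** dg l' ** B" by (simp only: E2 matrix_mul_assoc)
    finally show ?thesis .
  qed
  have E4: "A ** dg l ** dg l = dg l' ** dg l' ** A"
  proof -
    have "A ** dg l ** dg l = dg l' ** (B ** dg l)" by (simp only: E2 matrix_mul_assoc)
    also have "\<dots> = dg l' ** dg l' ** A" by (simp only: E1 matrix_mul_assoc)
    finally show ?thesis .
  qed
  have Bij: "B$i$j * (l$j)^2 = (l'$i)^2 * B$i$j" for i j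
    using arg_cong[OF E3, of "\<lambda>M. M$i$j"] by (simp add: matrix_mul_assoc dg_dg dg_r dg_l power2_eq_square algebra_simps)
  have Aij: "A$i$j * (l$j)^2 = (l'$i)^2 * A$i$j" for i j
    using arg_cong[OF E4, of "\<lambda>M. M$i$j"] by (simp add: matrix_mul_assoc dg_dg dg_r dg_l power2_eq_square algebra_simps)
  have dist: "i \<noteq> k \<Longrightarrow> (l'$i)^2 \<noteq> (l'$k)^2" for i k :: 3
    using exhaust_3[of i] exhaust_3[of k] d d[THEN not_sym] by (elim disjE) simp_all
  have N: "B$i$j * A$k$j = 0" if "i \<noteq> k" for i j k
  proof (rule ccontr)
    assume "B$i$j * A$k$j \<noteq> 0"
    then have "B$i$j \<noteq> 0" "A$k$j \<noteq> 0" by auto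
    then have "(l$j)^2 = (l'$i)^2" "(l$j)^2 = (l'$k)^2" using Bij[of i j] Aij[of k j] by (auto simp: mult.commute)
    then show False using dist[OF that] by simp
  qed
  have img: "act g z \<in> Ssec" if zS: "z \<in> Ssec" for z
  proof -
    obtain x0 y0 m where z: "z = embS x0 y0 m" using zS unfolding Ssec_def by blast
    define M where "M = B ** dg m ** transpose A"
    have Md: "M$i$k = 0" if "i \<noteq> k" for i k
    proof -
      have "M$i$k = (\<Sum>j\<in>UNIV. (B ** dg m)$i$j * transpose A $j$k)"
        unfolding M_def by (simp only: matrix_matrix_mult_def[of "B ** dg m" "transpose A"] vec_lambda_beta)
      also have "\<dots> = (\<Sum>j\<in>UNIV. (B$i$j * A$k$j) * m$j)"
        by (simp add: dg_r transpose_def algebra_simps)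
      also have "\<dots> = 0" using N[OF that] by (intro sum.neutral) simp
      finally show ?thesis .
    qed
    have "act g z = embS (A$3$3 * x0) (B$3$3 * y0) (\<chi> i. M$i$i)"
      unfolding z gAB dg_embS act_simp[OF A] M_def[symmetric]
      using A13 B13 Md
      by (auto simp: vec_eq_iff forall_3 e3_vec dg_def)
    then show ?thesis by (auto simp: Ssec_def)
  qed
  show ?thesis unfolding normalizer_def using g img by auto
qed

theorem propositionB2:
  shows "rational_section Xvar Ssec"
  unfolding rational_section_def
proof (intro exI[of _ S0set] conjI)
  show "S0set \<subseteq> Ssec" by (rule S0_sub)
  show "openin (subtopology zariski Ssec) S0set" by (rule S0_open)
  show "Ssec \<subseteq> zariski closure_of S0set" using S_dense eucl_zcl by blast
  show "zariski closure_of (\<Union>g\<in>Ggrp. act g ` Ssec) = Xvar" by (rule closure_eq)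
  show "\<forall>g\<in>Ggrp. act g ` S0set \<inter> S0set \<noteq> {} \<longrightarrow> g \<in> normalizer Ssec"
    using norm_lemma by blast
qed

end
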